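(* Let $t,a_1,\dots,a_n\in\mathbb{C}$ and \[P(x,y)=\prod_{i=1}^n\big((x-a_i)^2-y\big)+t\in\mathbb{C}[x,y].\] If the $a_i$ are pairwise distinct and $t\neq 0$, then $P(x,y)$ is irreducible in $\mathbb{C}[x,y]$. *)

theory Defs
  imports "HOL-Computational_Algebra.Polynomial_Factorial"
begin

text \<open>We model C[x,y] as (C[x])[y], i.e. the type complex poly poly:
  the outer variable is y, the coefficients are polynomials in x.
  The polynomial P(x,y) = prod_{i=1}^n ((x - a_i)^2 - y) + t.\<close>

definition bivP :: "nat \<Rightarrow> (nat \<Rightarrow> complex) \<Rightarrow> complex \<Rightarrow> complex poly poly" where
  "bivP n a t = (\<Prod>i = 1..n. [: [:- a i, 1:] ^ 2, -1 :]) + [: [: t :] :]"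

end

theory Submission
  imports Defs
begin

definition E :: "complex poly poly \<Rightarrow> complex \<Rightarrow> complex \<Rightarrow> complex" where
  "E G x y = poly (map_poly (\<lambda>p. poly p x) G) y"

lemma E_link: "poly (poly G q) x = E G x (poly q x)"
  unfolding E_def
  by (induction G rule: pCons_induct) (simp_all add: map_poly_pCons)

lemma E_sum: "E G x y = (\<Sum>m\<le>degree G. poly (coeff G m) x * y ^ m)"
proof -
  let ?M = "map_poly (\<lambda>p. poly p x) G"
  have d: "degree ?M \<le> degree G"
    by (rule degree_le) (simp add: coeff_map_poly coeff_eq_0)
  have "E G x y = poly (\<Sum>i\<le>degree G. monom (coeff ?M i) i) y"
    unfolding E_def using poly_as_sum_of_monoms'[OF d] by simp
  then show ?thesis by (simp add: poly_sum poly_monom coeff_map_poly)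
qed

lemma roots_zero:
  fixes p :: "complex poly"
  assumes "inj_on a {1..n}" "\<And>i. i \<in> {1..n} \<Longrightarrow> poly p (a i) = 0" "degree p < n"
  shows "p = 0"
proof (rule ccontr)
  assume p: "p \<noteq> 0"
  have "a ` {1..n} \<subseteq> {x. poly p x = 0}" using assms(2) by auto
  then have "card (a ` {1..n}) \<le> card {x. poly p x = 0}"
    by (intro card_mono poly_roots_finite p)
  also have "\<dots> \<le> degree p" by (rule card_poly_roots_bound) (use p in auto)
  finally show False using assms(1,3) by (simp add: card_image)
qed


lemma const_pow: "[:c:] ^ n = [:(c::'a::comm_ring_1) ^ n:]"
  by (induction n) (simp_all add: one_pCons)

lemma bivP_props:
  assumes "n \<ge> 1"
  shows "degree (bivP n a t) = n" "lead_coeff (bivP n a t) = [:(-1)^n:]"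
proof -
  let ?F = "\<Prod>i = 1..n. [: [:- a i, 1:] ^ 2, -1 :]"
  have dF: "degree ?F = n"
    by (subst degree_prod_eq_sum_degree) auto
  have lF: "lead_coeff ?F = (-1)^n"
    by (simp add: lead_coeff_prod)
  have lt: "degree [: [: t :] :] < degree ?F" using dF assms by simp
  show "degree (bivP n a t) = n"
    unfolding bivP_def using degree_add_eq_left[OF lt] dF by simp
  have "lead_coeff (bivP n a t) = lead_coeff ?F"
    unfolding bivP_def using lead_coeff_add_le[OF lt] by (simp add: add.commute)
  moreover have "(-1::complex poly) ^ n = [:(-1)^n:]"
  proof -
    have "(-1::complex poly) = [:-1:]" by (simp add: one_pCons)
    then show ?thesis by (simp only: const_pow)
  qed
  ultimately show "lead_coeff (bivP n a t) = [:(-1)^n:]" using lF by simp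
qed

lemma bivP_eval:
  assumes "i \<in> {1..n}"
  shows "poly (bivP n a t) ([:- a i, 1:] ^ 2) = [:t:]"
proof -
  have "poly (\<Prod>j = 1..n. [: [:- a j, 1:] ^ 2, -1 :]) ([:- a i, 1:] ^ 2) = 0"
    unfolding poly_prod using assms by (intro prod_zero) auto
  then show ?thesis unfolding bivP_def by simp
qed


definition R :: "complex poly poly \<Rightarrow> complex \<Rightarrow> complex poly" where
  "R G x = (\<Sum>m\<le>degree G. smult (poly (coeff G m) x) ([:x, -1:] ^ (2*m)))"

lemma R_poly: "poly (R G x) b = E G x ((x - b)^2)"
  unfolding R_def E_sum by (simp add: poly_sum power_mult)

lemma R_coeff:
  assumes "i \<ge> 2 * degree G"
  shows "coeff (R G x) i = (if i = 2 * degree G then poly (lead_coeff G) x else 0)"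
proof -
  let ?k = "degree G"
  have dp: "degree ([:x, -1:] ^ m) = m" for m
    by (simp add: degree_power_eq)
  have lc: "lead_coeff ([:x, -1:] ^ m) = (-1) ^ m" for m
    by (simp add: lead_coeff_power)
  have z: "coeff ([:x, -1:] ^ (2*m)) i = 0" if "m < ?k" for m
    by (rule coeff_eq_0) (use that assms dp in auto)
  have "coeff (R G x) i = (\<Sum>m\<le>?k. poly (coeff G m) x * coeff ([:x, -1:] ^ (2*m)) i)"
    unfolding R_def by (simp add: coeff_sum)
  also have "\<dots> = (\<Sum>m<?k. poly (coeff G m) x * coeff ([:x, -1:] ^ (2*m)) i)
      + poly (coeff G ?k) x * coeff ([:x, -1:] ^ (2*?k)) i"
    by (simp add: lessThan_Suc_atMost[symmetric])
  also have "\<dots> = poly (coeff G ?k) x * coeff ([:x, -1:] ^ (2*?k)) i"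
    using z by simp
  also have "\<dots> = (if i = 2 * ?k then poly (lead_coeff G) x else 0)"
  proof (cases "i = 2 * ?k")
    case True
    then show ?thesis using lc[of "2*?k"] dp[of "2*?k"] by simp
  next
    case False
    then have "coeff ([:x, -1:] ^ (2*?k)) i = 0"
      using assms dp by (intro coeff_eq_0) auto
    then show ?thesis using False by simp
  qed
  finally show ?thesis .
qed


lemma key:
  assumes inj: "inj_on a {1..n}" and t: "t \<noteq> 0" and n: "n \<ge> 1"
    and fac: "bivP n a t = G * H" and k1: "1 \<le> degree G" and k2: "2 * degree G \<le> n"
  shows False
proof -
  let ?k = "degree G"
  have P0: "bivP n a t \<noteq> 0" using bivP_props(1)[OF n, of a t] n by auto
  have G0: "G \<noteq> 0" and H0: "H \<noteq> 0" using P0 fac by auto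
  have "lead_coeff G * lead_coeff H = [:(-1)^n:]"
    using bivP_props(2)[OF n, of a t] fac by (simp add: lead_coeff_mult)
  moreover have "lead_coeff G \<noteq> 0" "lead_coeff H \<noteq> 0" using G0 H0 by auto
  ultimately have "degree (lead_coeff G) = 0"
    by (metis add_is_0 degree_mult_eq degree_pCons_0)
  then obtain c where c: "\<And>x. poly (lead_coeff G) x = c"
    by (rule degree_eq_zeroE) auto
  have curve: "\<exists>ci. \<forall>x. E G x ((x - a i)^2) = ci" if i: "i \<in> {1..n}" for i
  proof -
    let ?q = "[:- a i, 1:] ^ 2"
    have "poly G ?q * poly H ?q = [:t:]"
      using bivP_eval[OF i, of a t] fac by simp
    moreover have "[:t:] \<noteq> 0" using t by simp
    ultimately have "degree (poly G ?q) = 0"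
      by (metis add_is_0 degree_mult_eq degree_pCons_0 mult_eq_0_iff)
    then obtain ci where "\<And>x. poly (poly G ?q) x = ci"
      by (rule degree_eq_zeroE) auto
    then show ?thesis using E_link[of G ?q] by auto
  qed
  have indep: "E G x1 ((x1 - b)^2) = E G x2 ((x2 - b)^2)" for x1 x2 b
  proof -
    have "degree (R G x1 - R G x2) \<le> 2 * ?k - 1"
    proof (rule degree_le, intro allI impI)
      fix i assume "2 * ?k - 1 < i"
      then have "i \<ge> 2 * ?k" by auto
      then show "coeff (R G x1 - R G x2) i = 0"
        using R_coeff[of G i] c by simp
    qed
    then have "degree (R G x1 - R G x2) < n" using k1 k2 by linarith
    moreover have "poly (R G x1 - R G x2) (a i) = 0" if "i \<in> {1..n}" for i
      using curve[OF that] by (auto simp: R_poly)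
    ultimately have "R G x1 - R G x2 = 0" using roots_zero[OF inj] by blast
    then show ?thesis using R_poly[of G x1 b] R_poly[of G x2 b] by simp
  qed
  define f where "f b = E G 0 (b^2)" for b
  have fE: "E G x ((x - b)^2) = f b" for x b
    unfolding f_def using indep[of x b 0] by simp
  have "f u = f v" for u v
  proof -
    define x where "x = (u + v) / 2"
    define s where "s = (v - u) / 2"
    have "f u = E G x (s^2)" using fE[of x u] by (simp add: x_def s_def field_simps power2_eq_square)
    also have "\<dots> = f v" using fE[of x v] by (simp add: x_def s_def field_simps power2_eq_square)
    finally show ?thesis .
  qed
  then have const: "E G x y = f 0" for x y
    using fE[of x "x - csqrt y"] by (simp add: power2_csqrt)
  have "\<forall>y. poly (map_poly (\<lambda>p. poly p x) G - [:f 0:]) y = 0" for x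
    using const by (simp add: E_def)
  then have "map_poly (\<lambda>p. poly p x) G = [:f 0:]" for x
    using poly_all_0_iff_0 by (metis eq_iff_diff_eq_0)
  then have "coeff (map_poly (\<lambda>p. poly p x) G) ?k = 0" for x
    using k1 by (simp add: coeff_pCons split: nat.splits)
  then have "c = 0" using c by (simp add: coeff_map_poly)
  then have "lead_coeff G = 0" using c poly_all_0_iff_0 by blast
  then show False using G0 by simp
qed


lemma unit_factor:
  assumes n: "n \<ge> 1" and fac: "bivP n a t = G * H" and d: "degree G = 0"
  shows "is_unit G"
proof -
  have P0: "bivP n a t \<noteq> 0" using bivP_props(1)[OF n, of a t] n by auto
  have G0: "G \<noteq> 0" and H0: "H \<noteq> 0" using P0 fac by auto
  have "lead_coeff G * lead_coeff H = [:(-1)^n:]"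
    using bivP_props(2)[OF n, of a t] fac by (simp add: lead_coeff_mult)
  moreover have "lead_coeff G \<noteq> 0" "lead_coeff H \<noteq> 0" using G0 H0 by auto
  ultimately have "degree (lead_coeff G) = 0"
    by (metis add_is_0 degree_mult_eq degree_pCons_0)
  then obtain c where c: "lead_coeff G = [:c:]" by (rule degree_eq_zeroE) auto
  have "c \<noteq> 0" using c G0 by auto
  then have "is_unit [:c:]" by (simp add: is_unit_poly_iff dvd_field_iff)
  moreover have "G = [:lead_coeff G:]" using d by (rule degree_eq_zeroE) auto
  ultimately show ?thesis using c by (simp add: is_unit_poly_iff)
qed

theorem mainTheorem2:
  fixes n :: nat and a :: "nat \<Rightarrow> complex" and t :: complex
  assumes "n \<ge> 1"
    and "inj_on a {1..n}"
    and "t \<noteq> 0"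
  shows "irreducible (bivP n a t)"
proof (rule irreducibleI)
  have d: "degree (bivP n a t) = n" by (rule bivP_props(1)[OF assms(1)])
  then show "bivP n a t \<noteq> 0" using assms(1) by auto
  show "\<not> is_unit (bivP n a t)"
    using d assms(1) by (auto simp: is_unit_poly_iff)
  fix G H assume fac: "bivP n a t = G * H"
  then have G0: "G \<noteq> 0" and H0: "H \<noteq> 0" using \<open>bivP n a t \<noteq> 0\<close> by auto
  have sum: "degree G + degree H = n" using fac d degree_mult_eq[OF G0 H0] by simp
  show "is_unit G \<or> is_unit H"
  proof (cases "degree G = 0 \<or> degree H = 0")
    case True
    then show ?thesis
    proof
      assume "degree G = 0" then show ?thesis using unit_factor[OF assms(1) fac] by auto
    next
      assume "degree H = 0" then show ?thesis
        using unit_factor[OF assms(1), of a t H G] fac by (auto simp: mult.commute)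
    qed
  next
    case False
    show ?thesis
    proof (cases "2 * degree G \<le> n")
      case True
      then show ?thesis using key[OF assms(2,3,1) fac] False by auto
    next
      case f2: False
      then have "2 * degree H \<le> n" using sum by linarith
      then show ?thesis using key[OF assms(2,3,1), of H G] fac False by (auto simp: mult.commute)
    qed
  qed
qed

end
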